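(* Let $\Phi$ be a random power-law $k$-SAT formula with $n$ variables, $m$ clauses, $k\ge3$, and constant $\beta>\frac{2k-3}{k-2}$. Let $\varepsilon>0$ be a constant such that $c=(k-1)-(1+\varepsilon)\frac{\beta-1}{\beta-2}>0$. If $\Delta=m/n\in o\left(n^{\varepsilon}/\log^{\varepsilon}n\right)$, then there exists $r\in\Theta\left(n\,\Delta^{-1/\varepsilon}\right)$ such that the clause-variable incidence graph $G(\Phi)$ is asymptotically almost surely an $(r,c)$-bipartite expander.
   Context: Power-law random $k$-SAT model: given $n$ variables $x_1,\dots,x_n$, $m$ clauses, an integer $k\ge 3$ and a constant $\beta>2$, assign weights $w_i=i^{-1/(\beta-1)}$. Each of the $m$ clauses is generated independently: $k$ distinct variables are drawn one after another without repetition, each draw choosing among the not-yet-drawn variables with probability proportional to their weights; each chosen variable is then negated independently with probability $1/2$. "Asymptotically almost surely" means with probability tending to $1$ as $n\to\infty$. The clause-variable incidence graph $G(\Phi)$ is the bipartite graph on the clause set $C$ and variable set $V$ with clause $c$ adjacent to variable $v$ iff $v$ occurs (positively or negatively) in $c$. For $C'\subseteq C$, $N(C')$ is the set of variables adjacent to some clause in $C'$. $G(\Phi)$ is an $(r,c)$-bipartite expander if $|N(C')|\ge(1+c)|C'|$ for every $C'\subseteq C$ with $|C'|\le r$. *)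

theory Defs
  imports "HOL-Probability.Probability" "HOL-Library.Landau_Symbols"
begin

text \<open>Variables are 1..n, variable i has weight
  i powr (-1/(beta-1)). A literal is a pair (variable, sign) where the sign True
  means the variable is negated. A clause is a list of k literals over distinct
  variables; a formula is a list of m clauses (clause j is the j-th entry).\<close>

definition pl_weight :: "real \<Rightarrow> nat \<Rightarrow> real" where
  "pl_weight \<beta> i = real i powr (-1 / (\<beta> - 1))"

definition weighted_choice :: "real \<Rightarrow> nat set \<Rightarrow> nat pmf" where
  "weighted_choice \<beta> S =
     (if finite S \<and> S \<noteq> {} \<and> sum (pl_weight \<beta>) S > 0
      then embed_pmf (\<lambda>i. if i \<in> S then pl_weight \<beta> i / sum (pl_weight \<beta>) S else 0)
      else return_pmf 0)"

fun draw_vars :: "real \<Rightarrow> nat \<Rightarrow> nat set \<Rightarrow> nat list pmf" where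
  "draw_vars \<beta> 0 S = return_pmf []"
| "draw_vars \<beta> (Suc j) S =
     bind_pmf (weighted_choice \<beta> S) (\<lambda>v.
     bind_pmf (draw_vars \<beta> j (S - {v})) (\<lambda>vs. return_pmf (v # vs)))"

fun add_signs :: "nat list \<Rightarrow> (nat \<times> bool) list pmf" where
  "add_signs [] = return_pmf []"
| "add_signs (v # vs) =
     bind_pmf (bernoulli_pmf (1/2)) (\<lambda>b.
     bind_pmf (add_signs vs) (\<lambda>ls. return_pmf ((v, b) # ls)))"

definition random_clause :: "nat \<Rightarrow> nat \<Rightarrow> real \<Rightarrow> (nat \<times> bool) list pmf" where
  "random_clause n k \<beta> = bind_pmf (draw_vars \<beta> k {1..n}) add_signs"

fun random_formula :: "nat \<Rightarrow> nat \<Rightarrow> nat \<Rightarrow> real \<Rightarrow> (nat \<times> bool) list list pmf" where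
  "random_formula n 0 k \<beta> = return_pmf []"
| "random_formula n (Suc m) k \<beta> =
     bind_pmf (random_clause n k \<beta>) (\<lambda>c.
     bind_pmf (random_formula n m k \<beta>) (\<lambda>cs. return_pmf (c # cs)))"

text \<open>Clause-variable incidence graph: clause j (j < length \<Phi>) is adjacent to the
  variables occurring in it. N(C') is the neighbourhood of a set of clauses.\<close>
definition clause_vars :: "(nat \<times> bool) list list \<Rightarrow> nat \<Rightarrow> nat set" where
  "clause_vars \<Phi> j = fst ` set (\<Phi> ! j)"

definition nbhd :: "(nat \<times> bool) list list \<Rightarrow> nat set \<Rightarrow> nat set" where
  "nbhd \<Phi> C' = (\<Union>j\<in>C'. clause_vars \<Phi> j)"

definition bipartite_expander :: "(nat \<times> bool) list list \<Rightarrow> nat \<Rightarrow> real \<Rightarrow> bool" where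
  "bipartite_expander \<Phi> r c \<longleftrightarrow>
     (\<forall>C' \<subseteq> {..<length \<Phi>}. card C' \<le> r \<longrightarrow> real (card (nbhd \<Phi> C')) \<ge> (1 + c) * real (card C'))"

end

theory Submission
  imports Defs
begin

fun Hf :: "real \<Rightarrow> nat \<Rightarrow> int \<Rightarrow> real" where
  "Hf x 0 u = (if u < 0 then 0 else 1)"
| "Hf x (Suc l) u = x * Hf x l u + Hf x l (u - 1)"

lemma Hf_neg: "u < 0 \<Longrightarrow> Hf x l u = 0"
  by (induction l arbitrary: u) auto

lemma Hf_nonneg: "x \<ge> 0 \<Longrightarrow> Hf x l u \<ge> 0"
  by (induction l arbitrary: u) auto

lemma Hf_mono: "x \<ge> 0 \<Longrightarrow> u \<le> v \<Longrightarrow> Hf x l u \<le> Hf x l v"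
proof (induction l arbitrary: u v)
  case (Suc l)
  have "x * Hf x l u \<le> x * Hf x l v" using Suc by (intro mult_left_mono) auto
  moreover have "Hf x l (u-1) \<le> Hf x l (v-1)" using Suc by auto
  ultimately show ?case by simp
qed auto

lemma Hf_bound: "0 \<le> x \<Longrightarrow> x \<le> 1 \<Longrightarrow> 0 \<le> u \<Longrightarrow> Hf x l u \<le> 2^l * x^(l - nat u)"
proof (induction l arbitrary: u)
  case 0 then show ?case by simp
next
  case (Suc l)
  have a: "x * Hf x l u \<le> x * (2^l * x^(l - nat u))"
    using Suc by (intro mult_left_mono) auto
  have b: "x * x^(l - nat u) \<le> x^(Suc l - nat u)"
  proof (cases "nat u \<le> l")
    case True then show ?thesis by (simp add: Suc_diff_le)
  next
    case False then show ?thesis using Suc by simp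
  qed
  have c: "Hf x l (u - 1) \<le> 2^l * x^(Suc l - nat u)"
  proof (cases "u = 0")
    case True then show ?thesis using Hf_neg[of "u-1"] Suc by simp
  next
    case False
    then have "Hf x l (u-1) \<le> 2^l * x^(l - nat (u-1))" using Suc by auto
    moreover have "l - nat (u-1) = Suc l - nat u" using False Suc by (simp add: nat_diff_distrib')
    ultimately show ?thesis by simp
  qed
  have d: "x * (2^l * x^(l - nat u)) \<le> 2^l * x^(Suc l - nat u)" using b by (simp add: mult.left_commute)
  show ?case using a c d by (simp only: Hf.simps power_Suc)
qed

lemma powr_step:
  fixes a :: real and q :: nat
  assumes a: "0 < a" "a < 1"
  shows "(1 - a) * real (Suc q) powr (-a) \<le> real (Suc q) powr (1 - a) - real q powr (1 - a)"
proof (cases "q = 0")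
  case True then show ?thesis using a by simp
next
  case False
  then have qpos: "real q > 0" by simp
  have "\<exists>z::real. real q < z \<and> z < real (Suc q) \<and>
     (real (Suc q) powr (1-a) - real q powr (1-a) = (real (Suc q) - real q) * ((1-a) * z powr (1 - a - 1)))"
  proof (rule MVT2)
    fix x assume "real q \<le> x" "x \<le> real (Suc q)"
    then have "x > 0" using qpos by simp
    then show "((\<lambda>b. b powr (1-a)) has_real_derivative (1-a) * x powr (1 - a - 1)) (at x)"
      by (rule has_real_derivative_powr)
  qed simp
  then obtain z where z: "real q < z" "z < real (Suc q)"
    "real (Suc q) powr (1-a) - real q powr (1-a) = (1-a) * z powr (- a)" by auto
  have "real (Suc q) powr (-a) \<le> z powr (-a)"
    using z qpos a by (intro powr_mono2') auto
  then show ?thesis using z a by (simp add: mult_left_mono)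
qed

lemma sum_first_powr:
  fixes a :: real
  assumes a: "0 < a" "a < 1"
  shows "(\<Sum>i=1..q. real i powr (-a)) \<le> real q powr (1 - a) / (1 - a)"
proof (induction q)
  case 0 then show ?case by simp
next
  case (Suc q)
  have "(\<Sum>i=1..Suc q. real i powr (-a)) = (\<Sum>i=1..q. real i powr (-a)) + real (Suc q) powr (-a)"
    by simp
  also have "\<dots> \<le> real q powr (1 - a) / (1 - a) + real (Suc q) powr (-a)" using Suc by simp
  also have "\<dots> = (real q powr (1 - a) + (1 - a) * real (Suc q) powr (-a)) / (1 - a)"
    using a by (simp add: field_simps)
  also have "\<dots> \<le> real (Suc q) powr (1 - a) / (1 - a)"
    using powr_step[OF a, of q] a by (intro divide_right_mono) auto
  finally show ?case .
qed

lemma sum_set_powr: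
  fixes a :: real
  assumes a: "0 < a" "a < 1"
  shows "finite T \<Longrightarrow> 0 \<notin> T \<Longrightarrow> (\<Sum>i\<in>T. real i powr (-a)) \<le> (\<Sum>i=1..card T. real i powr (-a))"
proof (induction "card T" arbitrary: T)
  case 0 then show ?case by simp
next
  case (Suc q)
  then have ne: "T \<noteq> {}" by auto
  define M where "M = Max T"
  have MT: "M \<in> T" using Suc ne M_def by simp
  have sub: "T \<subseteq> {1..M}" using Suc M_def by (auto simp: Suc_le_eq intro: Max_ge) (metis neq0_conv)
  have "card T \<le> M" using card_mono[OF _ sub] by simp
  have "(\<Sum>i\<in>T. real i powr (-a)) = (\<Sum>i\<in>T-{M}. real i powr (-a)) + real M powr (-a)"
    using Suc MT by (simp add: sum.remove)
  also have "(\<Sum>i\<in>T-{M}. real i powr (-a)) \<le> (\<Sum>i=1..q. real i powr (-a))"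
  proof -
    have "card (T - {M}) = q" using Suc(2,3) MT by simp
    then show ?thesis using Suc(1)[of "T - {M}"] Suc(3,4) by simp
  qed
  also have "real M powr (-a) \<le> real (Suc q) powr (-a)"
    using \<open>card T \<le> M\<close> Suc(2) a by (intro powr_mono2') auto
  finally show ?case using Suc(2)[symmetric] by simp
qed

lemma weight_set_bound:
  fixes a :: real
  assumes a: "0 < a" "a < 1" and "finite T" "0 \<notin> T" "card T \<le> t"
  shows "(\<Sum>i\<in>T. real i powr (-a)) \<le> real t powr (1 - a) / (1 - a)"
proof -
  have "(\<Sum>i\<in>T. real i powr (-a)) \<le> real (card T) powr (1 - a) / (1 - a)"
    using sum_set_powr[OF a assms(3,4)] sum_first_powr[OF a] order_trans by blast
  also have "\<dots> \<le> real t powr (1 - a) / (1 - a)"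
    using assms by (intro divide_right_mono powr_mono2) auto
  finally show ?thesis .
qed

lemma pmf_weighted_choice:
  assumes "finite S" "S \<noteq> {}" "sum (pl_weight \<beta>) S > 0" "\<And>i. i \<in> S \<Longrightarrow> pl_weight \<beta> i \<ge> 0"
  shows "pmf (weighted_choice \<beta> S) i = (if i \<in> S then pl_weight \<beta> i / sum (pl_weight \<beta>) S else 0)"
proof -
  let ?f = "\<lambda>i. if i \<in> S then pl_weight \<beta> i / sum (pl_weight \<beta>) S else 0"
  have nn: "\<And>i. 0 \<le> ?f i" using assms by auto
  have "(\<integral>\<^sup>+x. ennreal (?f x) \<partial>count_space UNIV) = (\<Sum>x\<in>S. ennreal (?f x))"
    using assms by (intro nn_integral_count_space') auto
  also have "\<dots> = ennreal (\<Sum>x\<in>S. ?f x)" using assms by (intro sum_ennreal) auto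
  also have "(\<Sum>x\<in>S. ?f x) = 1" using assms by (simp add: sum_divide_distrib[symmetric])
  finally have pr: "(\<integral>\<^sup>+x. ennreal (?f x) \<partial>count_space UNIV) = 1" by simp
  show ?thesis unfolding weighted_choice_def using assms pmf_embed_pmf[OF nn pr] by simp
qed

lemma prob_weighted_choice:
  fixes \<beta> :: real and n t :: nat
  assumes b: "\<beta> > 2" and S: "S \<subseteq> {1..n}" "S \<noteq> {}" "2 * card S \<ge> n"
    and V: "finite V" "card V \<le> t"
  shows "measure_pmf.prob (weighted_choice \<beta> S) V
     \<le> 2 * real t powr (1 - 1/(\<beta>-1)) / ((1 - 1/(\<beta>-1)) * real n powr (1 - 1/(\<beta>-1)))"
proof -
  define a where "a = 1/(\<beta>-1)"
  have a: "0 < a" "a < 1" using b by (auto simp: a_def field_simps)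
  have w: "\<And>i. pl_weight \<beta> i = real i powr (-a)" by (simp add: pl_weight_def a_def)
  have finS: "finite S" using S finite_subset by blast
  have npos: "n > 0" using S by auto
  have lo: "\<And>i. i \<in> S \<Longrightarrow> real n powr (-a) \<le> pl_weight \<beta> i"
    unfolding w using S a by (intro powr_mono2') auto
  have "real (card S) * real n powr (-a) \<le> sum (pl_weight \<beta>) S"
    using sum_mono[OF lo] by simp
  moreover have "real n powr (1 - a) / 2 \<le> real (card S) * real n powr (-a)"
  proof -
    have "real n powr (1 - a) = real n * real n powr (-a)"
      using npos by (simp add: powr_diff powr_minus divide_inverse)
    moreover have "real n \<le> 2 * real (card S)" using S(3) by linarith
    ultimately show ?thesis
      using mult_right_mono[of "real n" "2*real(card S)" "real n powr (-a)"] by (simp add: mult_ac)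
  qed
  ultimately have W: "real n powr (1 - a) / 2 \<le> sum (pl_weight \<beta>) S" by linarith
  have Wpos: "sum (pl_weight \<beta>) S > 0"
    using W npos by (smt (verit) divide_pos_pos powr_gt_zero of_nat_0_less_iff)
  have nn: "\<And>i. pl_weight \<beta> i \<ge> 0" by (simp add: pl_weight_def)
  have "measure_pmf.prob (weighted_choice \<beta> S) V = (\<Sum>i\<in>V. pmf (weighted_choice \<beta> S) i)"
    using V by (simp add: measure_measure_pmf_finite)
  also have "\<dots> = (\<Sum>i\<in>V. (if i \<in> S then pl_weight \<beta> i / sum (pl_weight \<beta>) S else 0))"
    using pmf_weighted_choice[OF finS S(2) Wpos] nn by simp
  also have "\<dots> = (\<Sum>i\<in>V \<inter> S. pl_weight \<beta> i) / sum (pl_weight \<beta>) S"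
    using V by (simp add: sum.inter_restrict[symmetric] sum_divide_distrib)
  also have "\<dots> \<le> (real t powr (1 - a) / (1 - a)) / (real n powr (1 - a) / 2)"
  proof (rule frac_le)
    show "0 \<le> real t powr (1 - a) / (1 - a)" using a by simp
    show "(\<Sum>i\<in>V \<inter> S. pl_weight \<beta> i) \<le> real t powr (1 - a) / (1 - a)"
      unfolding w using S V a
      by (intro weight_set_bound) (auto intro: card_mono order_trans[OF card_mono[of V]])
    show "0 < real n powr (1 - a) / 2" using npos by simp
  qed (use W in auto)
  also have "\<dots> = 2 * real t powr (1 - a) / ((1 - a) * real n powr (1 - a))"
    by (simp add: field_simps)
  finally show ?thesis by (simp add: a_def)
qed

lemma draw_vars_bound:
  fixes x :: real and t :: int
  assumes x0: "x \<ge> 0"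
    and hx: "\<And>S V. S \<subseteq> {1..n} \<Longrightarrow> card S + k \<ge> n + 1 \<Longrightarrow> finite V \<Longrightarrow> int (card V) \<le> t
              \<Longrightarrow> measure_pmf.prob (weighted_choice \<beta> S) V \<le> x"
    and hs: "\<And>S. S \<subseteq> {1..n} \<Longrightarrow> card S + k \<ge> n + 1 \<Longrightarrow> set_pmf (weighted_choice \<beta> S) \<subseteq> S"
  shows "S \<subseteq> {1..n} \<Longrightarrow> card S + k \<ge> n + j \<Longrightarrow> finite V \<Longrightarrow>
    (\<integral>\<^sup>+vs. ennreal (Hf x L (t - int (card (V \<union> set vs)))) \<partial>draw_vars \<beta> j S)
      \<le> ennreal (Hf x (L + j) (t - int (card V)))"
proof (induction j arbitrary: S V)
  case 0 then show ?case by simp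
next
  case (Suc j)
  let ?M = "weighted_choice \<beta> S"
  define u where "u = t - int (card V)"
  have "(\<integral>\<^sup>+vs. ennreal (Hf x L (t - int (card (V \<union> set vs)))) \<partial>draw_vars \<beta> (Suc j) S)
      = (\<integral>\<^sup>+v. (\<integral>\<^sup>+vs. ennreal (Hf x L (t - int (card (insert v V \<union> set vs)))) \<partial>draw_vars \<beta> j (S - {v})) \<partial>?M)"
    by (simp add: nn_integral_return)
  also have "\<dots> \<le> (\<integral>\<^sup>+v. ennreal (Hf x (L + j) (t - int (card (insert v V)))) \<partial>?M)"
  proof (rule nn_integral_mono_AE, rule AE_pmfI)
    fix v assume v: "v \<in> set_pmf ?M"
    have c1: "card S + k \<ge> n + 1" using Suc.prems(2) by simp
    have vS: "v \<in> S" using hs[OF Suc.prems(1) c1] v by blast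
    have fin: "finite S" using Suc.prems(1) finite_subset by blast
    have "card (S - {v}) + k \<ge> n + j" using Suc.prems vS fin by (simp add: card_Diff_singleton)
    moreover have "S - {v} \<subseteq> {1..n}" using Suc.prems(1) by blast
    moreover have "finite (insert v V)" using Suc.prems(3) by simp
    ultimately show "(\<integral>\<^sup>+vs. ennreal (Hf x L (t - int (card (insert v V \<union> set vs)))) \<partial>draw_vars \<beta> j (S - {v}))
        \<le> ennreal (Hf x (L + j) (t - int (card (insert v V))))"
      using Suc.IH by blast
  qed
  also have "\<dots> \<le> (\<integral>\<^sup>+v. ennreal (Hf x (L + j) u) * indicator V v + ennreal (Hf x (L + j) (u - 1)) \<partial>?M)"
  proof (rule nn_integral_mono)
    fix v
    show "ennreal (Hf x (L + j) (t - int (card (insert v V))))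
        \<le> ennreal (Hf x (L + j) u) * indicator V v + ennreal (Hf x (L + j) (u - 1))"
    proof (cases "v \<in> V")
      case True then show ?thesis by (simp add: insert_absorb u_def)
    next
      case False then show ?thesis using Suc.prems(3) by (simp add: u_def algebra_simps)
    qed
  qed
  also have "\<dots> = ennreal (Hf x (L + j) u) * emeasure ?M V + ennreal (Hf x (L + j) (u - 1))"
    by (simp add: nn_integral_add nn_integral_cmult_indicator measure_pmf.emeasure_space_1)
  also have "\<dots> \<le> ennreal (x * Hf x (L + j) u) + ennreal (Hf x (L + j) (u - 1))"
  proof (cases "u < 0")
    case True then show ?thesis by (simp add: Hf_neg)
  next
    case False
    then have "int (card V) \<le> t" by (simp add: u_def)
    then have "measure_pmf.prob ?M V \<le> x"
      using hx[OF Suc.prems(1) _ Suc.prems(3)] Suc.prems(2) by simp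
    then have "emeasure ?M V \<le> ennreal x" unfolding measure_pmf.emeasure_eq_measure by (rule ennreal_leI)
    then have "ennreal (Hf x (L + j) u) * emeasure ?M V \<le> ennreal (Hf x (L + j) u) * ennreal x"
      by (intro mult_left_mono) auto
    also have "\<dots> = ennreal (x * Hf x (L + j) u)"
      using x0 Hf_nonneg[OF x0] by (simp add: ennreal_mult[symmetric] mult.commute)
    finally show ?thesis by (intro add_right_mono)
  qed
  also have "\<dots> = ennreal (Hf x (L + Suc j) u)"
  proof -
    have "ennreal (x * Hf x (L + j) u) + ennreal (Hf x (L + j) (u - 1))
        = ennreal (x * Hf x (L + j) u + Hf x (L + j) (u - 1))"
      by (rule ennreal_plus[symmetric]) (use x0 Hf_nonneg[OF x0] in auto)
    also have "x * Hf x (L + j) u + Hf x (L + j) (u - 1) = Hf x (L + Suc j) u" by simp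
    finally show ?thesis .
  qed
  finally show ?case by (simp add: u_def)
qed

lemma add_signs_fst: "c \<in> set_pmf (add_signs vs) \<Longrightarrow> map fst c = vs"
  by (induction vs arbitrary: c) auto

lemma nn_integral_random_clause:
  "(\<integral>\<^sup>+c. g (fst ` set c) \<partial>random_clause n k \<beta>) = (\<integral>\<^sup>+vs. g (set vs) \<partial>draw_vars \<beta> k {1..n})"
proof -
  have "(\<integral>\<^sup>+c. g (fst ` set c) \<partial>random_clause n k \<beta>)
     = (\<integral>\<^sup>+vs. (\<integral>\<^sup>+c. g (fst ` set c) \<partial>add_signs vs) \<partial>draw_vars \<beta> k {1..n})"
    by (simp add: random_clause_def)
  also have "\<dots> = (\<integral>\<^sup>+vs. g (set vs) \<partial>draw_vars \<beta> k {1..n})"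
  proof (rule nn_integral_cong)
    fix vs
    have "(\<integral>\<^sup>+c. g (fst ` set c) \<partial>add_signs vs) = (\<integral>\<^sup>+c. g (set vs) \<partial>add_signs vs)"
    proof (rule nn_integral_cong_AE, rule AE_pmfI)
      fix c assume "c \<in> set_pmf (add_signs vs)"
      then have "map fst c = vs" by (rule add_signs_fst)
      then show "g (fst ` set c) = g (set vs)" by (metis set_map)
    qed
    then show "(\<integral>\<^sup>+c. g (fst ` set c) \<partial>add_signs vs) = g (set vs)"
      by (simp add: measure_pmf.emeasure_space_1)
  qed
  finally show ?thesis .
qed

lemma nbhd_Cons:
  "nbhd (c # cs) J = (if 0 \<in> J then fst ` set c else {}) \<union> nbhd cs {j. Suc j \<in> J}"
proof -
  have gen: "\<And>A :: nat \<Rightarrow> nat set. (\<Union>j\<in>J. A j) = (if 0\<in>J then A 0 else {}) \<union> (\<Union>i\<in>{i. Suc i \<in> J}. A (Suc i))"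
  proof -
    fix A :: "nat \<Rightarrow> nat set"
    show "(\<Union>j\<in>J. A j) = (if 0\<in>J then A 0 else {}) \<union> (\<Union>i\<in>{i. Suc i \<in> J}. A (Suc i))"
    proof (rule set_eqI, rule iffI)
      fix v assume "v \<in> (\<Union>j\<in>J. A j)"
      then obtain j where j: "j \<in> J" "v \<in> A j" by blast
      show "v \<in> (if 0\<in>J then A 0 else {}) \<union> (\<Union>i\<in>{i. Suc i \<in> J}. A (Suc i))"
      proof (cases j)
        case 0 then show ?thesis using j by simp
      next
        case (Suc i) then show ?thesis using j by blast
      qed
    qed (auto split: if_splits)
  qed
  show ?thesis unfolding nbhd_def clause_vars_def by (subst gen) simp
qed

lemma card_shift: "finite J \<Longrightarrow> card {j. Suc j \<in> J} = card (J - {0})"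
proof -
  assume "finite J"
  have "Suc ` {j. Suc j \<in> J} = J - {0}" by (auto simp: image_iff) (metis not0_implies_Suc)
  moreover have "inj Suc" by simp
  ultimately show ?thesis by (metis card_image inj_on_subset subset_UNIV)
qed

lemma formula_bound:
  fixes x :: real and t :: int
  assumes x0: "x \<ge> 0"
    and hx: "\<And>S V. S \<subseteq> {1..n} \<Longrightarrow> card S + k \<ge> n + 1 \<Longrightarrow> finite V \<Longrightarrow> int (card V) \<le> t
              \<Longrightarrow> measure_pmf.prob (weighted_choice \<beta> S) V \<le> x"
    and hs: "\<And>S. S \<subseteq> {1..n} \<Longrightarrow> card S + k \<ge> n + 1 \<Longrightarrow> set_pmf (weighted_choice \<beta> S) \<subseteq> S"
  shows "J \<subseteq> {..<m} \<Longrightarrow> finite V \<Longrightarrow>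
    (\<integral>\<^sup>+\<Phi>. ennreal (Hf x L (t - int (card (V \<union> nbhd \<Phi> J)))) \<partial>random_formula n m k \<beta>)
      \<le> ennreal (Hf x (L + k * card J) (t - int (card V)))"
proof (induction m arbitrary: J V)
  case 0 then show ?case by (simp add: nbhd_def)
next
  case (Suc m)
  define J' where "J' = {j. Suc j \<in> J}"
  have J'sub: "J' \<subseteq> {..<m}" using Suc.prems(1) by (auto simp: J'_def)
  have finJ: "finite J" using Suc.prems(1) finite_subset by blast
  have cJ: "card J = (if 0 \<in> J then Suc (card J') else card J')"
    using card_shift[OF finJ] finJ by (simp add: J'_def card_Diff_singleton) (metis card_0_eq empty_iff Suc_pred neq0_conv)
  define W where "W = (\<lambda>c::(nat \<times> bool) list. V \<union> (if 0 \<in> J then fst ` set c else {}))"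
  have "(\<integral>\<^sup>+\<Phi>. ennreal (Hf x L (t - int (card (V \<union> nbhd \<Phi> J)))) \<partial>random_formula n (Suc m) k \<beta>)
     = (\<integral>\<^sup>+c. (\<integral>\<^sup>+cs. ennreal (Hf x L (t - int (card (W c \<union> nbhd cs J')))) \<partial>random_formula n m k \<beta>)
          \<partial>random_clause n k \<beta>)"
    by (simp add: nn_integral_return nbhd_Cons W_def J'_def Un_assoc)
  also have "\<dots> \<le> (\<integral>\<^sup>+c. ennreal (Hf x (L + k * card J') (t - int (card (W c)))) \<partial>random_clause n k \<beta>)"
    by (rule nn_integral_mono) (use Suc.IH J'sub Suc.prems(2) in \<open>auto simp: W_def\<close>)
  also have "\<dots> \<le> ennreal (Hf x (L + k * card J) (t - int (card V)))"
  proof (cases "0 \<in> J")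
    case False
    then show ?thesis using cJ by (simp add: W_def measure_pmf.emeasure_space_1)
  next
    case True
    have "(\<integral>\<^sup>+c. ennreal (Hf x (L + k * card J') (t - int (card (W c)))) \<partial>random_clause n k \<beta>)
       = (\<integral>\<^sup>+vs. ennreal (Hf x (L + k * card J') (t - int (card (V \<union> set vs)))) \<partial>draw_vars \<beta> k {1..n})"
      using True nn_integral_random_clause[where g="\<lambda>A. ennreal (Hf x (L + k * card J') (t - int (card (V \<union> A))))"]
      by (simp add: W_def)
    also have "\<dots> \<le> ennreal (Hf x (L + k * card J' + k) (t - int (card V)))"
      by (rule draw_vars_bound[OF x0 hx hs]) (use Suc.prems(2) in auto)
    also have "L + k * card J' + k = L + k * card J" using True cJ by simp
    finally show ?thesis .
  qed
  finally show ?case .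
qed

definition xb :: "real \<Rightarrow> nat \<Rightarrow> nat \<Rightarrow> real" where
  "xb \<beta> n t = 2 * real t powr (1 - 1/(\<beta>-1)) / ((1 - 1/(\<beta>-1)) * real n powr (1 - 1/(\<beta>-1)))"

lemma xb_nonneg: "\<beta> > 2 \<Longrightarrow> xb \<beta> n t \<ge> 0"
proof -
  assume b: "\<beta> > 2"
  then have "1/(\<beta>-1) < 1" by (simp add: field_simps)
  then show ?thesis unfolding xb_def by (intro divide_nonneg_nonneg mult_nonneg_nonneg) auto
qed

lemma per_set_bound:
  fixes t :: nat
  assumes b: "\<beta> > 2" and nk: "n \<ge> 2 * k" "k \<ge> 1"
    and x1: "xb \<beta> n t \<le> 1"
    and J: "J \<subseteq> {..<m}"
  shows "measure_pmf.prob (random_formula n m k \<beta>) {\<Phi>. card (nbhd \<Phi> J) \<le> t}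
     \<le> 2^(k * card J) * (xb \<beta> n t)^(k * card J - t)"
proof -
  let ?x = "xb \<beta> n t"
  have x0: "?x \<ge> 0" using xb_nonneg[OF b] .
  have hs: "set_pmf (weighted_choice \<beta> S) \<subseteq> S" if S: "S \<subseteq> {1..n}" "card S + k \<ge> n + 1" for S
  proof -
    have finS: "finite S" using S finite_subset by blast
    have ne: "S \<noteq> {}" using S nk by auto
    have nn: "\<And>i. pl_weight \<beta> i \<ge> 0" by (simp add: pl_weight_def)
    have pos: "\<And>i. i \<in> S \<Longrightarrow> pl_weight \<beta> i > 0" using S by (auto simp: pl_weight_def)
    have "sum (pl_weight \<beta>) S > 0" using ne finS pos by (intro sum_pos) auto
    then show ?thesis using pmf_weighted_choice[OF finS ne _ nn] by (auto simp: set_pmf_iff split: if_splits)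
  qed
  have hx: "measure_pmf.prob (weighted_choice \<beta> S) V \<le> ?x"
    if S: "S \<subseteq> {1..n}" "card S + k \<ge> n + 1" and V: "finite V" "int (card V) \<le> int t" for S V
  proof -
    have ne: "S \<noteq> {}" using S nk by auto
    have "2 * card S \<ge> n" using S nk by linarith
    then show ?thesis unfolding xb_def using prob_weighted_choice[OF b S(1) ne _ V(1), of t] V by simp
  qed
  have "emeasure (random_formula n m k \<beta>) {\<Phi>. card (nbhd \<Phi> J) \<le> t}
      = (\<integral>\<^sup>+\<Phi>. indicator {\<Phi>. card (nbhd \<Phi> J) \<le> t} \<Phi> \<partial>random_formula n m k \<beta>)" by simp
  also have "\<dots> \<le> (\<integral>\<^sup>+\<Phi>. ennreal (Hf ?x 0 (int t - int (card ({} \<union> nbhd \<Phi> J)))) \<partial>random_formula n m k \<beta>)"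
    by (rule nn_integral_mono) (auto split: split_indicator)
  also have "\<dots> \<le> ennreal (Hf ?x (0 + k * card J) (int t - int (card ({}::nat set))))"
    by (rule formula_bound[OF x0 hx hs J]) auto
  also have "\<dots> \<le> ennreal (2^(k * card J) * ?x^(k * card J - t))"
    using Hf_bound[OF x0 x1, of "int t" "k * card J"] by (intro ennreal_leI) simp
  finally have "ennreal (measure_pmf.prob (random_formula n m k \<beta>) {\<Phi>. card (nbhd \<Phi> J) \<le> t})
     \<le> ennreal (2^(k * card J) * ?x^(k * card J - t))" by (simp add: measure_pmf.emeasure_eq_measure)
  then show ?thesis using x0 by (simp add: ennreal_le_iff)
qed

lemma length_random_formula: "\<Phi> \<in> set_pmf (random_formula n m k \<beta>) \<Longrightarrow> length \<Phi> = m"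
  by (induction m arbitrary: \<Phi>) auto

definition ts :: "real \<Rightarrow> nat \<Rightarrow> nat" where
  "ts c s = nat (\<lceil>(1 + c) * real s\<rceil> - 1)"

lemma ts_lt: "c > 0 \<Longrightarrow> s \<ge> 1 \<Longrightarrow> real (ts c s) < (1 + c) * real s"
proof -
  assume c: "c > 0" "s \<ge> 1"
  have "(1 + c) * real s > 0" using c by simp
  then have "\<lceil>(1 + c) * real s\<rceil> \<ge> 1" by (simp add: ceiling_le_iff[symmetric])
  then have "real (ts c s) = of_int \<lceil>(1 + c) * real s\<rceil> - 1" unfolding ts_def by simp
  moreover have "of_int \<lceil>(1 + c) * real s\<rceil> - 1 < (1 + c) * real s" by (meson ceiling_correct)
  ultimately show ?thesis by simp
qed

lemma ts_card: "c > 0 \<Longrightarrow> real N < (1 + c) * real s \<Longrightarrow> N \<le> ts c s"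
proof -
  assume "c > 0" "real N < (1 + c) * real s"
  then have "int N < \<lceil>(1 + c) * real s\<rceil>" by (simp add: less_ceiling_iff)
  then show ?thesis unfolding ts_def by linarith
qed

lemma union_bound:
  assumes b: "\<beta> > 2" and nk: "n \<ge> 2 * k" "k \<ge> 1" and c: "c > 0"
    and x1: "\<And>s. 1 \<le> s \<Longrightarrow> s \<le> min r m \<Longrightarrow> xb \<beta> n (ts c s) \<le> 1"
  shows "measure_pmf.prob (random_formula n m k \<beta>) {\<Phi>. \<not> bipartite_expander \<Phi> r c}
     \<le> (\<Sum>s=1..min r m. real (m choose s) * (2^(k * s) * (xb \<beta> n (ts c s))^(k * s - ts c s)))"
proof -
  let ?M = "random_formula n m k \<beta>"
  define A where "A = (\<lambda>J. {\<Phi>. card (nbhd \<Phi> J) \<le> ts c (card J)})"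
  define I where "I = (\<lambda>s. {J. J \<subseteq> {..<m} \<and> card J = s})"
  have finI: "finite (I s)" for s unfolding I_def by (rule finite_subset[of _ "Pow {..<m}"]) auto
  have cardI: "card (I s) = m choose s" for s unfolding I_def using n_subsets[of "{..<m}" s] by simp
  have sub: "{\<Phi>. \<not> bipartite_expander \<Phi> r c} \<inter> set_pmf ?M \<subseteq> (\<Union>s\<in>{1..min r m}. \<Union>J\<in>I s. A J)"
  proof
    fix \<Phi> assume "\<Phi> \<in> {\<Phi>. \<not> bipartite_expander \<Phi> r c} \<inter> set_pmf ?M"
    then have nb: "\<not> bipartite_expander \<Phi> r c" and len: "length \<Phi> = m"
      using length_random_formula by auto
    then obtain C' where C': "C' \<subseteq> {..<m}" "card C' \<le> r"
      "\<not> (1 + c) * real (card C') \<le> real (card (nbhd \<Phi> C'))"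
      unfolding bipartite_expander_def by auto
    have "card C' \<noteq> 0"
    proof
      assume "card C' = 0" then show False using C'(3) by simp
    qed
    moreover have "card C' \<le> m" using C'(1) by (metis card_lessThan card_mono finite_lessThan)
    ultimately have s: "card C' \<in> {1..min r m}" using C'(2) by auto
    have "card (nbhd \<Phi> C') \<le> ts c (card C')" using C'(3) c by (intro ts_card) auto
    then show "\<Phi> \<in> (\<Union>s\<in>{1..min r m}. \<Union>J\<in>I s. A J)"
      using s C'(1) unfolding A_def I_def by blast
  qed
  have "measure_pmf.prob ?M {\<Phi>. \<not> bipartite_expander \<Phi> r c}
      = measure_pmf.prob ?M ({\<Phi>. \<not> bipartite_expander \<Phi> r c} \<inter> set_pmf ?M)"
    by (simp add: measure_Int_set_pmf)
  also have "\<dots> \<le> measure_pmf.prob ?M (\<Union>s\<in>{1..min r m}. \<Union>J\<in>I s. A J)"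
    using sub by (intro measure_pmf.finite_measure_mono) auto
  also have "\<dots> \<le> (\<Sum>s\<in>{1..min r m}. measure_pmf.prob ?M (\<Union>J\<in>I s. A J))"
    by (rule measure_pmf.finite_measure_subadditive_finite) auto
  also have "\<dots> \<le> (\<Sum>s\<in>{1..min r m}. (\<Sum>J\<in>I s. measure_pmf.prob ?M (A J)))"
    by (intro sum_mono measure_pmf.finite_measure_subadditive_finite finI) auto
  also have "\<dots> \<le> (\<Sum>s\<in>{1..min r m}. (\<Sum>J\<in>I s. 2^(k * s) * (xb \<beta> n (ts c s))^(k * s - ts c s)))"
  proof (intro sum_mono)
    fix s J assume s: "s \<in> {1..min r m}" and J: "J \<in> I s"
    then have "card J = s" "J \<subseteq> {..<m}" by (auto simp: I_def)
    then show "measure_pmf.prob ?M (A J) \<le> 2^(k * s) * (xb \<beta> n (ts c s))^(k * s - ts c s)"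
      unfolding A_def using per_set_bound[OF b nk x1] s by auto
  qed
  also have "\<dots> = (\<Sum>s=1..min r m. real (m choose s) * (2^(k * s) * (xb \<beta> n (ts c s))^(k * s - ts c s)))"
    by (simp add: cardI)
  finally show ?thesis .
qed

lemma choose_le_exp: "real (m choose s) \<le> (exp 1 * real m / real s) ^ s"
proof (cases "s = 0")
  case True then show ?thesis by simp
next
  case False
  have ss: "real s ^ s / fact s \<le> exp (real s)"
  proof -
    have sm: "summable (\<lambda>n. real s ^ n /\<^sub>R fact n)" using exp_converges[of "real s"] sums_summable by blast
    have "(\<Sum>n\<in>{s}. real s ^ n /\<^sub>R fact n) \<le> (\<Sum>n. real s ^ n /\<^sub>R fact n)"
      by (rule sum_le_suminf[OF sm]) auto
    also have "\<dots> = exp (real s)" using exp_converges[of "real s"] sums_unique by metis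
    finally show ?thesis by (simp add: divide_inverse mult.commute)
  qed
  have "real (m choose s) * fact s \<le> real m ^ s"
    using binomial_fact_pow[of m s] by (metis of_nat_fact of_nat_le_iff of_nat_mult of_nat_power)
  then have "real (m choose s) \<le> real m ^ s / fact s" by (simp add: field_simps)
  also have "\<dots> = (real m / real s) ^ s * (real s ^ s / fact s)"
    using False by (simp add: power_divide)
  also have "\<dots> \<le> (real m / real s) ^ s * exp (real s)"
    using ss by (intro mult_left_mono) auto
  also have "exp (real s) = exp 1 ^ s" using exp_of_nat_mult[of s 1] by simp
  also have "(real m / real s) ^ s * exp 1 ^ s = (exp 1 * real m / real s) ^ s"
    by (simp add: power_mult_distrib[symmetric] mult.commute)
  finally show ?thesis .
qed

definition K2 :: "real \<Rightarrow> nat \<Rightarrow> real" where "K2 \<gamma> k = (2/\<gamma>) powr (1/\<gamma>) * real k"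
definition K3 :: "real \<Rightarrow> nat \<Rightarrow> real \<Rightarrow> real" where
  "K3 \<gamma> k \<epsilon> = exp 1 * 2^k * K2 \<gamma> k powr (1 + \<epsilon>)"

lemma term_bound:
  fixes k m n s :: nat and \<gamma> \<epsilon> c :: real and xf :: "nat \<Rightarrow> real"
  assumes g: "0 < \<gamma>" "\<gamma> < 1" and e: "\<epsilon> > 0" and c: "c > 0" and rel: "(1 + \<epsilon>)/\<gamma> = real k - 1 - c"
    and n: "n > 0" and s: "1 \<le> s" "s \<le> m" and k: "k \<ge> 1"
    and X: "\<And>t. xf t = (2/\<gamma>) * (real t / real n) powr \<gamma>"
    and q: "K3 \<gamma> k \<epsilon> * (real m / real n) * (real s / real n) powr \<epsilon> \<le> 1/2"
  shows "xf (ts c s) \<le> 1" and "real (m choose s) * (2^(k * s) * xf (ts c s)^(k * s - ts c s))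
          \<le> (K3 \<gamma> k \<epsilon> * (real m / real n) * (real s / real n) powr \<epsilon>) ^ s"
proof -
  define t where "t = ts c s"
  define z where "z = K2 \<gamma> k * real s / real n"
  define y where "y = z powr \<gamma>"
  have K2pos: "K2 \<gamma> k > 0" using g k by (simp add: K2_def)
  have zeq: "z = K2 \<gamma> k * (real s / real n)" by (simp add: z_def)
  have zpos: "z > 0" using K2pos s n by (simp add: z_def)
  have tlt: "real t < (1 + c) * real s" unfolding t_def using ts_lt c s by simp
  have ck: "1 + c < real k" using rel g e by (smt (verit) divide_pos_pos)
  have tle: "t \<le> k * s" using tlt ck s
    by (smt (verit) mult_right_mono of_nat_0_le_iff of_nat_le_iff of_nat_mult)
  have tle': "real t \<le> real k * real s" using tle by (metis of_nat_le_iff of_nat_mult)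
  have Xt: "xf t \<le> y"
  proof -
    have "xf t = (2/\<gamma>) * (real t / real n) powr \<gamma>" by (rule X)
    also have "\<dots> \<le> (2/\<gamma>) * (real (k * s) / real n) powr \<gamma>"
      using tle' g n by (intro mult_left_mono powr_mono2 divide_right_mono) auto
    also have "\<dots> = y"
    proof -
      have "z powr \<gamma> = ((2/\<gamma>) powr (1/\<gamma>)) powr \<gamma> * (real k * real s / real n) powr \<gamma>"
      proof -
        have "z = (2/\<gamma>) powr (1/\<gamma>) * (real k * real s / real n)" unfolding z_def K2_def by simp
        then show ?thesis by (simp only: powr_mult)
      qed
      also have "((2/\<gamma>) powr (1/\<gamma>)) powr \<gamma> = 2/\<gamma>" using g by (simp add: powr_powr)
      finally show ?thesis by (simp add: y_def)
    qed
    finally show ?thesis .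
  qed
  have xf0: "xf t \<ge> 0" using X g by simp
  have mn: "real s / real n \<le> real m / real n" using s n by (simp add: divide_right_mono)
  have z1: "z \<le> 1"
  proof (rule ccontr)
    assume "\<not> z \<le> 1"
    then have "1 < z powr (1 + \<epsilon>)" using e by (smt (verit) ge_one_powr_ge_zero powr_less_mono2 powr_one_eq_one)
    also have "z powr (1 + \<epsilon>) = K2 \<gamma> k powr (1 + \<epsilon>) * (real s / real n) powr (1 + \<epsilon>)"
      unfolding zeq by (simp only: powr_mult)
    also have "\<dots> = K2 \<gamma> k powr (1 + \<epsilon>) * (real s / real n) * (real s / real n) powr \<epsilon>"
      using s n by (simp add: powr_add)
    also have "\<dots> \<le> K3 \<gamma> k \<epsilon> * (real m / real n) * (real s / real n) powr \<epsilon>"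
    proof -
      have "1 * 1 \<le> exp 1 * (2::real)^k" by (rule mult_mono) auto
      then have "1 * K2 \<gamma> k powr (1 + \<epsilon>) \<le> (exp 1 * 2^k) * K2 \<gamma> k powr (1 + \<epsilon>)"
        by (intro mult_right_mono) auto
      then have "K2 \<gamma> k powr (1 + \<epsilon>) \<le> K3 \<gamma> k \<epsilon>" unfolding K3_def by simp
      then show ?thesis using mn
        by (intro mult_right_mono mult_mono) (auto simp: K3_def)
    qed
    finally have "1 < K3 \<gamma> k \<epsilon> * (real m / real n) * (real s / real n) powr \<epsilon>" .
    then show False using q by linarith
  qed
  have y1: "y \<le> 1" unfolding y_def using z1 zpos g by (intro powr_le1) auto
  have ypos: "y > 0" unfolding y_def using zpos by simp
  have expo: "(1 + \<epsilon>) * real s / \<gamma> \<le> real (k * s - t)"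
  proof -
    have "(1 + \<epsilon>) * real s / \<gamma> = ((1 + \<epsilon>) / \<gamma>) * real s" by simp
    also have "\<dots> = (real k - 1 - c) * real s" using rel by simp
    finally have "(1 + \<epsilon>) * real s / \<gamma> = (real k - 1 - c) * real s" .
    also have "\<dots> \<le> real k * real s - real t" using tlt by (simp add: algebra_simps)
    finally show ?thesis using tle by (simp add: of_nat_diff)
  qed
  have "xf t ^ (k * s - t) \<le> y ^ (k * s - t)" using Xt xf0 by (intro power_mono) auto
  also have "\<dots> = y powr real (k * s - t)" using ypos by (simp add: powr_realpow)
  also have "\<dots> \<le> y powr ((1 + \<epsilon>) * real s / \<gamma>)"
    using expo y1 ypos by (intro powr_mono') auto
  also have "\<dots> = z powr ((1 + \<epsilon>) * real s)" unfolding y_def using g by (simp add: powr_powr)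
  finally have Xb: "xf t ^ (k * s - t) \<le> z powr ((1 + \<epsilon>) * real s)" .
  have "real (m choose s) * (2^(k * s) * xf t^(k * s - t))
      \<le> (exp 1 * real m / real s) ^ s * (2^(k * s) * z powr ((1 + \<epsilon>) * real s))"
    using choose_le_exp[of m s] Xb xf0 by (intro mult_mono mult_left_mono) auto
  also have "\<dots> = (exp 1 * real m / real s * 2^k * z powr (1 + \<epsilon>)) ^ s"
  proof -
    have e1: "z powr ((1 + \<epsilon>) * real s) = (z powr (1 + \<epsilon>)) ^ s"
      using zpos by (simp add: powr_powr[symmetric] powr_realpow)
    have e2: "(2::real)^(k * s) = (2^k)^s" by (simp add: power_mult)
    show ?thesis unfolding e1 e2 power_mult_distrib by (simp only: mult_ac)
  qed
  also have "exp 1 * real m / real s * 2^k * z powr (1 + \<epsilon>)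
      = K3 \<gamma> k \<epsilon> * (real m / real n) * (real s / real n) powr \<epsilon>"
  proof -
    have "z powr (1 + \<epsilon>) = K2 \<gamma> k powr (1 + \<epsilon>) * ((real s / real n) * (real s / real n) powr \<epsilon>)"
    proof -
      have "(real s / real n) powr (1 + \<epsilon>) = (real s / real n) * (real s / real n) powr \<epsilon>"
        using s n by (simp add: powr_add)
      then show ?thesis unfolding zeq by (simp only: powr_mult)
    qed
    then show ?thesis unfolding K3_def using s n by (simp add: field_simps)
  qed
  finally show "real (m choose s) * (2^(k * s) * xf (ts c s)^(k * s - ts c s))
          \<le> (K3 \<gamma> k \<epsilon> * (real m / real n) * (real s / real n) powr \<epsilon>) ^ s" by (simp add: t_def)
  show "xf (ts c s) \<le> 1" using Xt y1 by (simp add: t_def)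
qed

lemma sum_bound:
  fixes R :: nat and q :: "nat \<Rightarrow> real" and L \<eta> :: real
  assumes q0: "\<And>s. 0 \<le> q s" and qh: "\<And>s. 1 \<le> s \<Longrightarrow> q s \<le> 1/2"
    and ql: "\<And>s. 1 \<le> s \<Longrightarrow> real s \<le> L \<Longrightarrow> q s \<le> \<eta>" and eta: "\<eta> \<ge> 0"
  shows "(\<Sum>s=1..R. q s ^ s) \<le> 4 * (\<eta> + (3/4) powr L)"
proof -
  have tb: "q s ^ s \<le> (\<eta> + (3/4) powr L) * (3/4)^(s-1)" if s: "1 \<le> s" for s
  proof (cases "real s \<le> L")
    case True
    have "q s ^ s = q s * q s ^ (s - 1)" using s by (metis Suc_diff_1 le_less_trans less_one linorder_not_le power_Suc)
    also have "\<dots> \<le> \<eta> * (1/2) ^ (s - 1)"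
      using ql[OF s True] qh[OF s] q0 eta by (intro mult_mono power_mono) auto
    also have "\<dots> \<le> \<eta> * (3/4) ^ (s - 1)"
      using eta by (intro mult_left_mono power_mono) auto
    also have "\<dots> \<le> (\<eta> + (3/4) powr L) * (3/4)^(s-1)"
      by (intro mult_right_mono) auto
    finally show ?thesis .
  next
    case False
    have "q s ^ s \<le> (1/2) ^ s" using qh[OF s] q0 by (intro power_mono) auto
    also have "(1/2::real) ^ s \<le> (9/16) ^ s" by (intro power_mono) auto
    also have "(9/16::real) ^ s = (3/4)^s * (3/4)^s" by (simp add: power_mult_distrib[symmetric])
    finally have a: "q s ^ s \<le> (3/4)^s * (3/4)^s" .
    have "(3/4::real)^s = (3/4) powr real s" by (simp add: powr_realpow)
    also have "\<dots> \<le> (3/4) powr L" using False by (intro powr_mono') auto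
    finally have b: "(3/4::real)^s \<le> (3/4) powr L" .
    have c: "(3/4::real) ^ s \<le> (3/4)^(s-1)" by (intro power_decreasing) auto
    have "(3/4::real)^s * (3/4)^s \<le> (3/4) powr L * (3/4)^(s-1)"
      using b c by (intro mult_mono) auto
    also have "\<dots> \<le> (\<eta> + (3/4) powr L) * (3/4)^(s-1)"
      using eta by (intro mult_right_mono) auto
    finally show ?thesis using a by linarith
  qed
  have "(\<Sum>s=1..R. q s ^ s) \<le> (\<Sum>s=1..R. (\<eta> + (3/4) powr L) * (3/4)^(s-1))"
    by (intro sum_mono tb) auto
  also have "\<dots> = (\<eta> + (3/4) powr L) * (\<Sum>s=1..R. (3/4::real)^(s-1))"
    by (simp add: sum_distrib_left)
  also have "(\<Sum>s=1..R. (3/4::real)^(s-1)) = (\<Sum>i<R. (3/4::real)^i)"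
  proof (induction R)
    case (Suc R) then show ?case by simp
  qed simp
  also have "(\<eta> + (3/4) powr L) * (\<Sum>i<R. (3/4::real)^i) \<le> (\<eta> + (3/4) powr L) * 4"
  proof (rule mult_left_mono)
    have "(\<Sum>i<R. (3/4::real)^i) = ((3/4)^R - 1) / (3/4 - 1)" by (rule geometric_sum) simp
    also have "\<dots> = 4 * (1 - (3/4)^R)" by simp
    also have "\<dots> \<le> 4" by simp
    finally show "(\<Sum>i<R. (3/4::real)^i) \<le> 4" .
  qed (use eta in auto)
  finally show ?thesis by (simp add: mult.commute)
qed

lemma powr_inv1: "(\<epsilon>::real) > 0 \<Longrightarrow> x > 0 \<Longrightarrow> (x powr (-1/\<epsilon>)) powr \<epsilon> = 1/x"
proof -
  assume e: "\<epsilon> > 0" and x: "x > 0"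
  have "(x powr (-1/\<epsilon>)) powr \<epsilon> = x powr ((-1/\<epsilon>) * \<epsilon>)" by (rule powr_powr)
  also have "(-1/\<epsilon>) * \<epsilon> = -1" using e by simp
  finally show ?thesis using x by (simp add: powr_neg_one)
qed

lemma powr_inv2: "(\<epsilon>::real) > 0 \<Longrightarrow> x > 0 \<Longrightarrow> (x powr \<epsilon>) powr (-1/\<epsilon>) = 1/x"
proof -
  assume e: "\<epsilon> > 0" and x: "x > 0"
  have "(x powr \<epsilon>) powr (-1/\<epsilon>) = x powr (\<epsilon> * (-1/\<epsilon>))" by (rule powr_powr)
  also have "\<epsilon> * (-1/\<epsilon>) = -1" using e by simp
  finally show ?thesis using x by (simp add: powr_neg_one)
qed

theorem mainTheorem4:
  fixes k :: nat and \<beta> \<epsilon> c :: real and m :: "nat \<Rightarrow> nat"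
  assumes hk: "k \<ge> 3"
    and h\<beta>: "\<beta> > (2 * real k - 3) / (real k - 2)"
    and h\<epsilon>: "\<epsilon> > 0"
    and hc: "c = (real k - 1) - (1 + \<epsilon>) * (\<beta> - 1) / (\<beta> - 2)"
    and hcpos: "c > 0"
    and h\<Delta>: "(\<lambda>n. real (m n) / real n) \<in> o(\<lambda>n. real n powr \<epsilon> / (ln (real n)) powr \<epsilon>)"
  shows "\<exists>r :: nat \<Rightarrow> nat.
           (\<lambda>n. real (r n)) \<in> \<Theta>(\<lambda>n. real n * (real (m n) / real n) powr (-1 / \<epsilon>)) \<and>
           (\<lambda>n. measure_pmf.prob (random_formula n (m n) k \<beta>)
                   {\<Phi>. bipartite_expander \<Phi> (r n) c}) \<longlonglongrightarrow> 1"
proof -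
  have k2: "real k - 2 > 0" using hk by simp
  have "(2 * real k - 3) / (real k - 2) = 2 + 1 / (real k - 2)" using k2 by (simp add: field_simps)
  moreover have "1 / (real k - 2) > 0" using k2 by simp
  ultimately have b2: "\<beta> > 2" using h\<beta> by linarith
  define \<gamma> where "\<gamma> = 1 - 1/(\<beta>-1)"
  have \<gamma>eq: "\<gamma> = (\<beta> - 2) / (\<beta> - 1)" using b2 by (simp add: \<gamma>_def field_simps)
  have g: "0 < \<gamma>" "\<gamma> < 1" using b2 by (auto simp: \<gamma>eq field_simps)
  have rel: "(1 + \<epsilon>)/\<gamma> = real k - 1 - c" using hc b2 by (simp add: \<gamma>eq field_simps)
  have Xeq: "\<And>n t. n > 0 \<Longrightarrow> xb \<beta> n t = (2/\<gamma>) * (real t / real n) powr \<gamma>"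
    by (simp add: xb_def \<gamma>_def[symmetric] powr_divide)
  define K where "K = K3 \<gamma> k \<epsilon>"
  have Kpos: "K > 0" using g hk by (simp add: K_def K3_def K2_def)
  define \<delta> where "\<delta> = (2 * K) powr (-1/\<epsilon>)"
  have \<delta>pos: "\<delta> > 0" using Kpos by (simp add: \<delta>_def)
  have \<delta>\<epsilon>: "\<delta> powr \<epsilon> = 1 / (2 * K)"
    unfolding \<delta>_def using Kpos h\<epsilon> by (intro powr_inv1) auto
  define \<Delta> where "\<Delta> = (\<lambda>n. real (m n) / real n)"
  define f where "f = (\<lambda>n. real n * \<Delta> n powr (-1 / \<epsilon>))"
  define r where "r = (\<lambda>n. nat \<lfloor>\<delta> * f n\<rfloor>)"
  have f0: "f n \<ge> 0" for n by (simp add: f_def \<Delta>_def)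
  have r_le: "real (r n) \<le> \<delta> * f n" for n
    using f0[of n] \<delta>pos by (simp add: r_def)
  have ev_small: "eventually (\<lambda>n. \<Delta> n \<le> real n powr \<epsilon> / ln (real n) powr \<epsilon>) sequentially"
  proof -
    have "eventually (\<lambda>n. norm (\<Delta> n) \<le> 1 * norm (real n powr \<epsilon> / ln (real n) powr \<epsilon>)) sequentially"
      using landau_o.smallD[OF h\<Delta>[folded \<Delta>_def], of 1] by simp
    then show ?thesis by eventually_elim (simp add: \<Delta>_def)
  qed
  have ln_inf: "filterlim (\<lambda>n::nat. ln (real n)) at_top sequentially"
    by (rule filterlim_compose[OF ln_at_top filterlim_real_sequentially])
  have ev_ln: "eventually (\<lambda>n. ln (real n) \<ge> 2 / \<delta>) sequentially"
    using ln_inf by (simp add: filterlim_at_top)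
  have ev_n: "eventually (\<lambda>n::nat. n \<ge> 2 * k + 3) sequentially" by (rule eventually_ge_at_top)
  have f_big: "eventually (\<lambda>n. m n > 0 \<longrightarrow> f n \<ge> 2 / \<delta>) sequentially"
    using ev_small ev_ln ev_n
  proof eventually_elim
    case (elim n)
    show ?case
    proof
      assume mpos: "m n > 0"
      have npos: "n > 0" using elim by simp
      have lnpos: "ln (real n) > 0" using elim by simp
      have Dpos: "\<Delta> n > 0" using mpos npos by (simp add: \<Delta>_def)
      have "real n powr \<epsilon> / ln (real n) powr \<epsilon> = (real n / ln (real n)) powr \<epsilon>"
        by (simp add: powr_divide)
      then have "((real n / ln (real n)) powr \<epsilon>) powr (-1/\<epsilon>) \<le> \<Delta> n powr (-1/\<epsilon>)"
        using elim Dpos h\<epsilon> by (intro powr_mono2') auto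
      also have "((real n / ln (real n)) powr \<epsilon>) powr (-1/\<epsilon>) = ln (real n) / real n"
        using powr_inv2[OF h\<epsilon>, of "real n / ln (real n)"] lnpos npos by simp
      finally have "ln (real n) / real n \<le> \<Delta> n powr (-1/\<epsilon>)" .
      then have "ln (real n) \<le> f n" using npos by (simp add: f_def field_simps)
      then show "f n \<ge> 2 / \<delta>" using elim by linarith
    qed
  qed
  have theta: "(\<lambda>n. real (r n)) \<in> \<Theta>(\<lambda>n. real n * (real (m n) / real n) powr (-1 / \<epsilon>))"
  proof -
    have "eventually (\<lambda>n. \<delta>/2 * norm (f n) \<le> norm (real (r n)) \<and> norm (real (r n)) \<le> \<delta> * norm (f n)) sequentially"
      using f_big
    proof eventually_elim
      case (elim n)
      show ?case
      proof (cases "m n = 0")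
        case True
        then have "f n = 0" by (simp add: f_def \<Delta>_def)
        then show ?thesis by (simp add: r_def)
      next
        case False
        then have fb: "\<delta> * f n \<ge> 2" using elim \<delta>pos by (simp add: field_simps)
        have "real (r n) \<ge> \<delta> * f n - 1" unfolding r_def using fb by linarith
        then show ?thesis using fb f0[of n] r_le[of n] by simp
      qed
    qed
    then have "(\<lambda>n. real (r n)) \<in> \<Theta>(f)" using \<delta>pos by (intro bigthetaI'[of "\<delta>/2" \<delta>]) auto
    then show ?thesis by (simp add: f_def \<Delta>_def)
  qed
  define \<eta> where "\<eta> = (\<lambda>n::nat. K * \<Delta> n * (ln (real n) / real n) powr \<epsilon>)"
  define B where "B = (\<lambda>n::nat. 4 * (\<eta> n + (3/4) powr ln (real n)))"
  define P where "P = (\<lambda>n. measure_pmf.prob (random_formula n (m n) k \<beta>) {\<Phi>. bipartite_expander \<Phi> (r n) c})"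
  have qhalf: "K * (real (m n) / real n) * (real s / real n) powr \<epsilon> \<le> 1/2"
    if s: "1 \<le> s" "s \<le> r n" "s \<le> m n" and npos: "n > 0" for n s
  proof -
    have Dpos: "\<Delta> n > 0" using s npos by (simp add: \<Delta>_def)
    have "real s \<le> \<delta> * f n" using s r_le[of n] by (meson order_trans of_nat_le_iff)
    then have "real s / real n \<le> \<delta> * \<Delta> n powr (-1/\<epsilon>)" using npos by (simp add: f_def field_simps)
    then have "(real s / real n) powr \<epsilon> \<le> (\<delta> * \<Delta> n powr (-1/\<epsilon>)) powr \<epsilon>"
      using h\<epsilon> by (intro powr_mono2) auto
    also have "\<dots> = \<delta> powr \<epsilon> * (\<Delta> n powr (-1/\<epsilon>)) powr \<epsilon>" by (simp add: powr_mult)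
    also have "(\<Delta> n powr (-1/\<epsilon>)) powr \<epsilon> = 1 / \<Delta> n"
      using powr_inv1[OF h\<epsilon> Dpos] .
    finally have "(real s / real n) powr \<epsilon> \<le> 1 / (2 * K) * (1 / \<Delta> n)" using \<delta>\<epsilon> by simp
    then have "K * \<Delta> n * (real s / real n) powr \<epsilon> \<le> K * \<Delta> n * (1 / (2 * K) * (1 / \<Delta> n))"
      using Kpos Dpos by (intro mult_left_mono) auto
    also have "\<dots> = 1/2" using Kpos Dpos by simp
    finally show ?thesis by (simp add: \<Delta>_def)
  qed
  have ev_bound: "eventually (\<lambda>n. 1 - B n \<le> P n) sequentially"
    using ev_n
  proof eventually_elim
    case (elim n)
    have npos: "n > 0" using elim by simp
    have nk: "n \<ge> 2 * k" "k \<ge> 1" using elim hk by auto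
    let ?M = "random_formula n (m n) k \<beta>"
    let ?R = "min (r n) (m n)"
    define qq where "qq = (\<lambda>s::nat. min (1/2) (K * \<Delta> n * (real s / real n) powr \<epsilon>))"
    have TB: "xb \<beta> n (ts c s) \<le> 1 \<and> real (m n choose s) * (2^(k * s) * xb \<beta> n (ts c s)^(k * s - ts c s))
          \<le> qq s ^ s" if s: "1 \<le> s" "s \<le> ?R" for s
    proof -
      have q: "K3 \<gamma> k \<epsilon> * (real (m n) / real n) * (real s / real n) powr \<epsilon> \<le> 1/2"
        using qhalf[of s n] s npos by (simp add: K_def)
      have "qq s = K3 \<gamma> k \<epsilon> * (real (m n) / real n) * (real s / real n) powr \<epsilon>"
        using q by (simp add: qq_def K_def \<Delta>_def)
      then show ?thesis
        using term_bound[OF g h\<epsilon> hcpos rel npos _ _ nk(2) Xeq[OF npos] q] s by simp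
    qed
    have "measure_pmf.prob ?M {\<Phi>. \<not> bipartite_expander \<Phi> (r n) c}
        \<le> (\<Sum>s=1..?R. real (m n choose s) * (2^(k * s) * (xb \<beta> n (ts c s))^(k * s - ts c s)))"
      using union_bound[OF b2 nk hcpos] TB by auto
    also have "\<dots> \<le> (\<Sum>s=1..?R. qq s ^ s)"
      using TB by (intro sum_mono) auto
    also have "\<dots> \<le> 4 * (\<eta> n + (3/4) powr ln (real n))"
    proof (rule sum_bound)
      show "\<And>s. 0 \<le> qq s" using Kpos by (simp add: qq_def \<Delta>_def)
      show "\<And>s. 1 \<le> s \<Longrightarrow> qq s \<le> 1/2" by (simp add: qq_def)
      show "0 \<le> \<eta> n" using Kpos by (simp add: \<eta>_def \<Delta>_def)
      fix s assume s: "1 \<le> s" "real s \<le> ln (real n)"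
      have "(real s / real n) powr \<epsilon> \<le> (ln (real n) / real n) powr \<epsilon>"
        using s npos h\<epsilon> by (intro powr_mono2 divide_right_mono) auto
      then have "K * \<Delta> n * (real s / real n) powr \<epsilon> \<le> K * \<Delta> n * (ln (real n) / real n) powr \<epsilon>"
        using Kpos by (intro mult_left_mono) (auto simp: \<Delta>_def)
      then show "qq s \<le> \<eta> n" by (simp add: qq_def \<eta>_def)
    qed
    finally have bad: "measure_pmf.prob ?M {\<Phi>. \<not> bipartite_expander \<Phi> (r n) c} \<le> B n"
      by (simp add: B_def)
    have "P n = 1 - measure_pmf.prob ?M {\<Phi>. \<not> bipartite_expander \<Phi> (r n) c}"
    proof -
      have "{\<Phi>. bipartite_expander \<Phi> (r n) c} = space ?M - {\<Phi>. \<not> bipartite_expander \<Phi> (r n) c}" by auto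
      moreover have "measure_pmf.prob ?M (space ?M - {\<Phi>. \<not> bipartite_expander \<Phi> (r n) c})
          = 1 - measure_pmf.prob ?M {\<Phi>. \<not> bipartite_expander \<Phi> (r n) c}"
        by (rule measure_pmf.prob_compl) simp
      ultimately show ?thesis unfolding P_def by simp
    qed
    then show ?case using bad by simp
  qed
  have eta_lim: "\<eta> \<longlonglongrightarrow> 0"
  proof -
    have t0: "(\<lambda>n. \<Delta> n / (real n powr \<epsilon> / ln (real n) powr \<epsilon>)) \<longlonglongrightarrow> 0"
      using smalloD_tendsto[OF h\<Delta>] by (simp add: \<Delta>_def)
    have "eventually (\<lambda>n. K * (\<Delta> n / (real n powr \<epsilon> / ln (real n) powr \<epsilon>)) = \<eta> n) sequentially"
      using eventually_ge_at_top[of "2::nat"]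
    proof eventually_elim
      case (elim n)
      then have "ln (real n) > 0" by simp
      then show ?case by (simp add: \<eta>_def powr_divide)
    qed
    moreover have "(\<lambda>n. K * (\<Delta> n / (real n powr \<epsilon> / ln (real n) powr \<epsilon>))) \<longlonglongrightarrow> 0"
      using tendsto_mult_right_zero[OF t0] by simp
    ultimately show ?thesis using Lim_transform_eventually by blast
  qed
  have pow_lim: "(\<lambda>n::nat. (3/4::real) powr ln (real n)) \<longlonglongrightarrow> 0"
  proof -
    have "(\<lambda>n::nat. real n powr ln (3/4::real)) \<longlonglongrightarrow> 0"
      by (rule tendsto_neg_powr[OF _ filterlim_real_sequentially]) simp
    moreover have "eventually (\<lambda>n. real n powr ln (3/4::real) = (3/4) powr ln (real n)) sequentially"
      using eventually_ge_at_top[of "1::nat"]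
      by eventually_elim (simp add: powr_def mult.commute)
    ultimately show ?thesis by (rule Lim_transform_eventually)
  qed
  have B_lim: "B \<longlonglongrightarrow> 0"
    unfolding B_def using tendsto_mult_right_zero[OF tendsto_add_zero[OF eta_lim pow_lim], of 4] by simp
  have "P \<longlonglongrightarrow> 1"
  proof (rule tendsto_sandwich[OF ev_bound _ _ tendsto_const])
    show "eventually (\<lambda>n. P n \<le> 1) sequentially" by (simp add: P_def)
    show "(\<lambda>n. 1 - B n) \<longlonglongrightarrow> 1" using tendsto_diff[OF tendsto_const B_lim, of 1] by simp
  qed
  then show ?thesis using theta unfolding P_def by blast
qed

end
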